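(* Every derivable separability judgment $\Sigma;\Gamma\vdash\tau:m$ has a derivation in which every occurrence of the conversion rule has, as its premise, an instance of the variable axiom. Equivalently, every derivable judgment is derivable in the system where the conversion rule is removed and replaced by the rule: from $(\alpha:m)\in\Gamma$ and $m\geq n$ infer $\Sigma;\Gamma\vdash\alpha:n$.
   Context: Type expressions: $\tau,\kappa ::= \alpha \mid \mathsf{float}\mid\mathsf{int}\mid\mathsf{bool}\mid t(\tau_1,\dots,\tau_n)\mid \tau\to\kappa\mid \tau_1\times\dots\times\tau_n\mid \forall\alpha.\tau\mid\exists\alpha.\tau\mid (\tau \text{ with } \kappa_1=\kappa_2)$ (the last is an equality guard), where $\alpha$ ranges over type variables and $t$ over type constructors. Separability modes are $\mathsf{Ind}<\mathsf{Sep}<\mathsf{Deepsep}$ (totally ordered). Mode composition: $\mathsf{Ind}\circ m=\mathsf{Ind}$, $\mathsf{Sep}\circ m=m$, $\mathsf{Deepsep}\circ m=\mathsf{Deepsep}$. A context $\Gamma$ is a finite list $\alpha_1:m_1,\dots,\alpha_k:m_k$; $\Gamma\le\Gamma'$ iff they have the same variables and pointwise $m\le m'$. A mode signature $\Sigma$ is a list of entries $t(\alpha_1:m_1,\dots,\alpha_n:m_n)$. The judgment $\Sigma;\Gamma\vdash\tau:m$ is defined by the rules: (variable axiom) if $(\alpha:m)\in\Gamma$ then $\Sigma;\Gamma\vdash\alpha:m$; (constructor) if $t(\alpha_1:m_1,\dots,\alpha_n:m_n)\in\Sigma$ and $\Sigma;\Gamma\vdash\tau_i:m\circ m_i$ for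 all $i$, then $\Sigma;\Gamma\vdash t(\tau_1,\dots,\tau_n):m$; (arrow) if $\Sigma;\Gamma\vdash\tau:m\circ\mathsf{Ind}$ and $\Sigma;\Gamma\vdash\kappa:m\circ\mathsf{Ind}$ then $\Sigma;\Gamma\vdash\tau\to\kappa:m$; (product) if $\Sigma;\Gamma\vdash\tau_i:m\circ\mathsf{Ind}$ for all $i$ then $\Sigma;\Gamma\vdash\tau_1\times\dots\times\tau_n:m$; (forall) if $\Sigma;\Gamma,\alpha:n\vdash\tau:m$ for some mode $n$ then $\Sigma;\Gamma\vdash\forall\alpha.\tau:m$; (exists) if $\Sigma;\Gamma,\alpha:\mathsf{Ind}\vdash\tau:m$ then $\Sigma;\Gamma\vdash\exists\alpha.\tau:m$; (conversion) if $\Sigma;\Gamma\vdash\tau:m$ and $m\ge n$ then $\Sigma;\Gamma\vdash\tau:n$; (guard) if for every $\Gamma'\ge\Gamma$ with $\Sigma;\Gamma'\vdash \kappa_1=\kappa_2$ we have $\Sigma;\Gamma'\vdash\tau:m$, then $\Sigma;\Gamma\vdash(\tau\text{ with }\kappa_1=\kappa_2):m$. Here $\Sigma;\Gamma\vdash\tau_1=\tau_2$ holds iff for every mode $m$, $\Sigma;\Gamma\vdash\tau_1:m \iff \Sigma;\Gamma\vdash\tau_2:m$. *)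

theory Defs
  imports Main
begin

datatype mode = Ind | Sep | Deepsep

fun mrank :: "mode \<Rightarrow> nat" where
  "mrank Ind = 0" | "mrank Sep = 1" | "mrank Deepsep = 2"

definition mode_le :: "mode \<Rightarrow> mode \<Rightarrow> bool" where
  "mode_le m n \<longleftrightarrow> mrank m \<le> mrank n"

fun mcomp :: "mode \<Rightarrow> mode \<Rightarrow> mode" where
  "mcomp Ind _ = Ind"
| "mcomp Sep m = m"
| "mcomp Deepsep _ = Deepsep"

type_synonym tcon = string

datatype ty =
    TVar nat
  | TFloat | TInt | TBool
  | TCon tcon "ty list"
  | TArrow ty ty
  | TProd "ty list"
  | TAll ty
  | TEx ty
  | TWith ty ty ty   \<comment> \<open>TWith \<tau> \<kappa>1 \<kappa>2 is (\<tau> with \<kappa>1 = \<kappa>2)\<close>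

text \<open>A context is a list of modes; TVar i refers to entry i, the most recently
  bound variable being entry 0 (binders extend the context at the front).
  (\<alpha>:m) \<in> \<Gamma> becomes  i < length \<Gamma> \<and> \<Gamma>!i = m.\<close>
type_synonym ctx = "mode list"

text \<open>A mode signature: entries t(\<alpha>1:m1,...,\<alpha>n:mn) as pairs (t, [m1,...,mn]).\<close>
type_synonym sig = "(tcon \<times> mode list) list"

definition ctx_le :: "ctx \<Rightarrow> ctx \<Rightarrow> bool" where
  "ctx_le \<Gamma> \<Gamma>' \<longleftrightarrow> length \<Gamma> = length \<Gamma>' \<and> (\<forall>i<length \<Gamma>. mode_le (\<Gamma>!i) (\<Gamma>'!i))"

text \<open>The guard rule mentions the judgment negatively (through the equality
  judgment), so the system is stratified: the guard premise refers to an
  equality oracle E, which is tied back to the judgment itself below.\<close>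

inductive der :: "(ctx \<Rightarrow> ty \<Rightarrow> ty \<Rightarrow> bool) \<Rightarrow> sig \<Rightarrow> ctx \<Rightarrow> ty \<Rightarrow> mode \<Rightarrow> bool"
  for E :: "ctx \<Rightarrow> ty \<Rightarrow> ty \<Rightarrow> bool" and \<Sigma> :: sig where
  der_var: "i < length \<Gamma> \<Longrightarrow> \<Gamma>!i = m \<Longrightarrow> der E \<Sigma> \<Gamma> (TVar i) m"
| der_con: "(t, ms) \<in> set \<Sigma> \<Longrightarrow> length ts = length ms \<Longrightarrow>
     (\<forall>i<length ts. der E \<Sigma> \<Gamma> (ts!i) (mcomp m (ms!i))) \<Longrightarrow> der E \<Sigma> \<Gamma> (TCon t ts) m"
| der_arrow: "der E \<Sigma> \<Gamma> \<tau> (mcomp m Ind) \<Longrightarrow> der E \<Sigma> \<Gamma> \<kappa> (mcomp m Ind) \<Longrightarrow>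
     der E \<Sigma> \<Gamma> (TArrow \<tau> \<kappa>) m"
| der_prod: "(\<forall>i<length ts. der E \<Sigma> \<Gamma> (ts!i) (mcomp m Ind)) \<Longrightarrow> der E \<Sigma> \<Gamma> (TProd ts) m"
| der_all: "der E \<Sigma> (n # \<Gamma>) \<tau> m \<Longrightarrow> der E \<Sigma> \<Gamma> (TAll \<tau>) m"
| der_ex: "der E \<Sigma> (Ind # \<Gamma>) \<tau> m \<Longrightarrow> der E \<Sigma> \<Gamma> (TEx \<tau>) m"
| der_conv: "der E \<Sigma> \<Gamma> \<tau> m \<Longrightarrow> mode_le n m \<Longrightarrow> der E \<Sigma> \<Gamma> \<tau> n"
| der_guard: "(\<forall>\<Gamma>'. ctx_le \<Gamma> \<Gamma>' \<longrightarrow> E \<Gamma>' \<kappa>1 \<kappa>2 \<longrightarrow> der E \<Sigma> \<Gamma>' \<tau> m) \<Longrightarrow>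
     der E \<Sigma> \<Gamma> (TWith \<tau> \<kappa>1 \<kappa>2) m"

inductive derR :: "(ctx \<Rightarrow> ty \<Rightarrow> ty \<Rightarrow> bool) \<Rightarrow> sig \<Rightarrow> ctx \<Rightarrow> ty \<Rightarrow> mode \<Rightarrow> bool"
  for E :: "ctx \<Rightarrow> ty \<Rightarrow> ty \<Rightarrow> bool" and \<Sigma> :: sig where
  derR_var: "i < length \<Gamma> \<Longrightarrow> \<Gamma>!i = m \<Longrightarrow> mode_le n m \<Longrightarrow> derR E \<Sigma> \<Gamma> (TVar i) n"
| derR_con: "(t, ms) \<in> set \<Sigma> \<Longrightarrow> length ts = length ms \<Longrightarrow>
     (\<forall>i<length ts. derR E \<Sigma> \<Gamma> (ts!i) (mcomp m (ms!i))) \<Longrightarrow> derR E \<Sigma> \<Gamma> (TCon t ts) m"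
| derR_arrow: "derR E \<Sigma> \<Gamma> \<tau> (mcomp m Ind) \<Longrightarrow> derR E \<Sigma> \<Gamma> \<kappa> (mcomp m Ind) \<Longrightarrow>
     derR E \<Sigma> \<Gamma> (TArrow \<tau> \<kappa>) m"
| derR_prod: "(\<forall>i<length ts. derR E \<Sigma> \<Gamma> (ts!i) (mcomp m Ind)) \<Longrightarrow> derR E \<Sigma> \<Gamma> (TProd ts) m"
| derR_all: "derR E \<Sigma> (n # \<Gamma>) \<tau> m \<Longrightarrow> derR E \<Sigma> \<Gamma> (TAll \<tau>) m"
| derR_ex: "derR E \<Sigma> (Ind # \<Gamma>) \<tau> m \<Longrightarrow> derR E \<Sigma> \<Gamma> (TEx \<tau>) m"
| derR_guard: "(\<forall>\<Gamma>'. ctx_le \<Gamma> \<Gamma>' \<longrightarrow> E \<Gamma>' \<kappa>1 \<kappa>2 \<longrightarrow> derR E \<Sigma> \<Gamma>' \<tau> m) \<Longrightarrow>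
     derR E \<Sigma> \<Gamma> (TWith \<tau> \<kappa>1 \<kappa>2) m"

definition jeq :: "(ctx \<Rightarrow> ty \<Rightarrow> mode \<Rightarrow> bool) \<Rightarrow> ctx \<Rightarrow> ty \<Rightarrow> ty \<Rightarrow> bool" where
  "jeq J \<Gamma> k1 k2 \<longleftrightarrow> (\<forall>m. J \<Gamma> k1 m \<longleftrightarrow> J \<Gamma> k2 m)"

text \<open>Level n: the guard's equality premise is evaluated with level n-1.
  A derivation of tau only involves guards on proper subterms of tau, so
  evaluating tau at level size tau uses, for every guard type kappa, a level
  strictly above size kappa; this is the well-founded reading of the rules.\<close>
fun derN :: "nat \<Rightarrow> sig \<Rightarrow> ctx \<Rightarrow> ty \<Rightarrow> mode \<Rightarrow> bool" where
  "derN 0 \<Sigma> = der (\<lambda>_ _ _. False) \<Sigma>"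
| "derN (Suc n) \<Sigma> = der (jeq (derN n \<Sigma>)) \<Sigma>"

fun derRN :: "nat \<Rightarrow> sig \<Rightarrow> ctx \<Rightarrow> ty \<Rightarrow> mode \<Rightarrow> bool" where
  "derRN 0 \<Sigma> = derR (\<lambda>_ _ _. False) \<Sigma>"
| "derRN (Suc n) \<Sigma> = derR (jeq (derRN n \<Sigma>)) \<Sigma>"

definition judg :: "sig \<Rightarrow> ctx \<Rightarrow> ty \<Rightarrow> mode \<Rightarrow> bool" where
  "judg \<Sigma> \<Gamma> \<tau> m \<longleftrightarrow> derN (size \<tau>) \<Sigma> \<Gamma> \<tau> m"

definition judgR :: "sig \<Rightarrow> ctx \<Rightarrow> ty \<Rightarrow> mode \<Rightarrow> bool" where
  "judgR \<Sigma> \<Gamma> \<tau> m \<longleftrightarrow> derRN (size \<tau>) \<Sigma> \<Gamma> \<tau> m"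

end

theory Submission
  imports Defs
begin

lemma mcomp_mono: "mode_le n m \<Longrightarrow> mode_le (mcomp n k) (mcomp m k)"
  by (cases n; cases m; cases k; simp add: mode_le_def)

lemma mode_le_trans: "mode_le a b \<Longrightarrow> mode_le b c \<Longrightarrow> mode_le a c"
  by (simp add: mode_le_def)

lemma derR_down:
  "derR E \<Sigma> \<Gamma> \<tau> m \<Longrightarrow> mode_le n m \<Longrightarrow> derR E \<Sigma> \<Gamma> \<tau> n"
proof (induction arbitrary: n rule: derR.induct)
  case (derR_var i \<Gamma> m n' n)
  then show ?case by (meson derR.derR_var mode_le_trans)
next
  case (derR_con t ms ts \<Gamma> m)
  then show ?case by (intro derR.derR_con[of t ms]) (auto intro: mcomp_mono)
next
  case (derR_arrow \<Gamma> \<tau> m \<kappa>)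
  then show ?case by (intro derR.derR_arrow) (auto intro: mcomp_mono)
next
  case (derR_prod ts \<Gamma> m)
  then show ?case by (intro derR.derR_prod) (auto intro: mcomp_mono)
next
  case (derR_all n \<Gamma> \<tau> m)
  then show ?case by (auto intro: derR.derR_all)
next
  case (derR_ex \<Gamma> \<tau> m)
  then show ?case by (auto intro: derR.derR_ex)
next
  case (derR_guard \<Gamma> \<kappa>1 \<kappa>2 \<tau> m)
  then show ?case by (auto intro: derR.derR_guard)
qed

lemma der_derR: "der E \<Sigma> \<Gamma> \<tau> m \<Longrightarrow> derR E \<Sigma> \<Gamma> \<tau> m"
proof (induction rule: der.induct)
  case (der_var i \<Gamma> m)
  then show ?case by (auto intro: derR.derR_var simp: mode_le_def)
next
  case (der_con t ms ts \<Gamma> m)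
  then show ?case by (intro derR.derR_con[of t ms]) auto
next
  case (der_arrow \<Gamma> \<tau> m \<kappa>)
  then show ?case by (intro derR.derR_arrow) auto
next
  case (der_prod ts \<Gamma> m)
  then show ?case by (intro derR.derR_prod) auto
next
  case (der_all n \<Gamma> \<tau> m)
  then show ?case by (auto intro: derR.derR_all)
next
  case (der_ex \<Gamma> \<tau> m)
  then show ?case by (auto intro: derR.derR_ex)
next
  case (der_conv \<Gamma> \<tau> m n)
  then show ?case using derR_down by blast
next
  case (der_guard \<Gamma> \<kappa>1 \<kappa>2 \<tau> m)
  then show ?case by (auto intro: derR.derR_guard)
qed

lemma derR_der: "derR E \<Sigma> \<Gamma> \<tau> m \<Longrightarrow> der E \<Sigma> \<Gamma> \<tau> m"
proof (induction rule: derR.induct)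
  case (derR_var i \<Gamma> m n)
  then show ?case by (meson der.der_var der.der_conv)
next
  case (derR_con t ms ts \<Gamma> m)
  then show ?case by (intro der.der_con[of t ms]) auto
next
  case (derR_arrow \<Gamma> \<tau> m \<kappa>)
  then show ?case by (intro der.der_arrow) auto
next
  case (derR_prod ts \<Gamma> m)
  then show ?case by (intro der.der_prod) auto
next
  case (derR_all n \<Gamma> \<tau> m)
  then show ?case by (auto intro: der.der_all)
next
  case (derR_ex \<Gamma> \<tau> m)
  then show ?case by (auto intro: der.der_ex)
next
  case (derR_guard \<Gamma> \<kappa>1 \<kappa>2 \<tau> m)
  then show ?case by (auto intro: der.der_guard)
qed

lemma der_eq: "der E \<Sigma> = derR E \<Sigma>"
  by (intro ext iffI) (auto intro: der_derR derR_der)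

lemma derN_eq: "derN n \<Sigma> = derRN n \<Sigma>"
  by (induction n) (simp_all add: der_eq)

theorem mainTheorem1:
  fixes \<Sigma> :: sig and \<Gamma> :: ctx and \<tau> :: ty and m :: mode
  assumes "judg \<Sigma> \<Gamma> \<tau> m"
  shows "judgR \<Sigma> \<Gamma> \<tau> m"
  using assms by (simp add: judg_def judgR_def derN_eq)

end
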